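(* Let $\mathcal{M}_1,\mathcal{M}_2$ be two matroids on the same finite ground set $E$ with $m=|E|$, and let $\textsc{OPT}$ be a maximum-cardinality set independent in both. For a uniformly random order $\pi$ of $E$ and $f\in[0,1]$, let $T_f^\pi$ be the set selected by Greedy after processing the first $fm$ elements of $\pi$, and for $i\in\{1,2\}$ let $\Phi_i(T_f^\pi)=\mathrm{span}_i(T_f^\pi)\cap\textsc{OPT}$. If $0<f,\epsilon\le\frac12$ and $\mathbb{E}_\pi[|T_1^\pi|]\le\left(\frac12+\epsilon\right)|\textsc{OPT}|$, then $$\mathbb{E}_\pi\left[|\Phi_1(T_f^\pi)\cap\Phi_2(T_f^\pi)|\right]\le 2\epsilon|\textsc{OPT}|\quad\text{and}\quad \mathbb{E}_\pi\left[|\Phi_1(T_f^\pi)\cup\Phi_2(T_f^\pi)|\right]\ge\left(1-\frac{2\epsilon}{f}+2\epsilon\right)|\textsc{OPT}|,$$ and consequently $\mathbb{E}_\pi[|T_f^\pi|]/|\textsc{OPT}|\ge \frac12-\left(\frac1f-2\right)\epsilon$.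
   Context: Greedy processes elements in order and adds an element whenever the current set together with it is independent in both $\mathcal{M}_1$ and $\mathcal{M}_2$. $\mathrm{span}_i(T)=\{e\in E:\mathrm{rank}_{\mathcal{M}_i}(T\cup\{e\})=\mathrm{rank}_{\mathcal{M}_i}(T)\}$. *)

theory Defs
  imports Complex_Main "HOL-Combinatorics.Multiset_Permutations"
begin

definition matroid :: "'a set \<Rightarrow> ('a set \<Rightarrow> bool) \<Rightarrow> bool" where
  "matroid E indep \<longleftrightarrow>
     finite E \<and>
     (\<forall>X. indep X \<longrightarrow> X \<subseteq> E) \<and>
     indep {} \<and>
     (\<forall>X Y. indep X \<and> Y \<subseteq> X \<longrightarrow> indep Y) \<and>
     (\<forall>X Y. indep X \<and> indep Y \<and> card X < card Y \<longrightarrow>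
        (\<exists>e \<in> Y - X. indep (insert e X)))"

definition mrank :: "('a set \<Rightarrow> bool) \<Rightarrow> 'a set \<Rightarrow> nat" where
  "mrank indep X = Max (card ` {Y. Y \<subseteq> X \<and> indep Y})"

definition mspan :: "'a set \<Rightarrow> ('a set \<Rightarrow> bool) \<Rightarrow> 'a set \<Rightarrow> 'a set" where
  "mspan E indep T = {e \<in> E. mrank indep (insert e T) = mrank indep T}"

definition greedy :: "('a set \<Rightarrow> bool) \<Rightarrow> ('a set \<Rightarrow> bool) \<Rightarrow> 'a list \<Rightarrow> 'a set" where
  "greedy I1 I2 xs =
     foldl (\<lambda>T e. if I1 (insert e T) \<and> I2 (insert e T) then insert e T else T) {} xs"

definition greedy_at :: "('a set \<Rightarrow> bool) \<Rightarrow> ('a set \<Rightarrow> bool) \<Rightarrow> real \<Rightarrow> 'a list \<Rightarrow> 'a set" where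
  "greedy_at I1 I2 f \<pi> = greedy I1 I2 (take (nat \<lceil>f * real (length \<pi>)\<rceil>) \<pi>)"

definition exp_order :: "'a set \<Rightarrow> ('a list \<Rightarrow> real) \<Rightarrow> real" where
  "exp_order E g = (\<Sum>\<pi>\<in>permutations_of_set E. g \<pi>) / real (card (permutations_of_set E))"

end

theory Submission
  imports Defs
begin

lemma mat_fin: "matroid E I \<Longrightarrow> finite E" by (simp add: matroid_def)
lemma mat_sub: "matroid E I \<Longrightarrow> I X \<Longrightarrow> X \<subseteq> E" by (simp add: matroid_def)
lemma mat_empty: "matroid E I \<Longrightarrow> I {}" by (simp add: matroid_def)
lemma mat_down: "matroid E I \<Longrightarrow> I X \<Longrightarrow> Y \<subseteq> X \<Longrightarrow> I Y" by (simp add: matroid_def)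
lemma mat_exch: "matroid E I \<Longrightarrow> I X \<Longrightarrow> I Y \<Longrightarrow> card X < card Y \<Longrightarrow> \<exists>e\<in>Y - X. I (insert e X)"
  by (simp add: matroid_def)
lemma mat_finI: "matroid E I \<Longrightarrow> I X \<Longrightarrow> finite X"
  using mat_fin mat_sub finite_subset by metis

lemma mrank_eq:
  assumes M: "matroid E I" and X: "finite X" and Y: "Y \<subseteq> X" "I Y"
    and bound: "\<And>Z. Z \<subseteq> X \<Longrightarrow> I Z \<Longrightarrow> card Z \<le> card Y"
  shows "mrank I X = card Y"
  unfolding mrank_def
proof (rule Max_eqI)
  show "finite (card ` {Y. Y \<subseteq> X \<and> I Y})" using X by simp
  show "card Y \<in> card ` {Y. Y \<subseteq> X \<and> I Y}" using Y by blast
qed (use bound in auto)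

lemma mrank_indep: assumes M: "matroid E I" and "I T" shows "mrank I T = card T"
proof -
  have "finite T" using mat_finI[OF M assms(2)] .
  then show ?thesis by (intro mrank_eq[OF M]) (use assms in \<open>auto intro: card_mono\<close>)
qed

lemma mrank_dep:
  assumes M: "matroid E I" and T: "I T" and D: "\<not> I (insert e T)"
  shows "mrank I (insert e T) = card T"
proof (rule mrank_eq[OF M])
  show "finite (insert e T)" using mat_finI[OF M T] by simp
  show "T \<subseteq> insert e T" by auto
  show "I T" by fact
  fix Z assume Z: "Z \<subseteq> insert e T" "I Z"
  show "card Z \<le> card T"
  proof (rule ccontr)
    assume "\<not> card Z \<le> card T"
    then obtain x where x: "x \<in> Z - T" "I (insert x T)" using mat_exch[OF M T Z(2)] by auto
    then have "x = e" using Z by auto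
    with x D show False by simp
  qed
qed

lemma mspan_char:
  assumes M: "matroid E I" and T: "I T"
  shows "e \<in> mspan E I T \<longleftrightarrow> e \<in> E \<and> (e \<in> T \<or> \<not> I (insert e T))"
proof (cases "e \<in> T")
  case True then show ?thesis by (auto simp: mspan_def insert_absorb)
next
  case False
  show ?thesis
  proof (cases "I (insert e T)")
    case True
    have "mrank I (insert e T) = Suc (card T)"
      using mrank_indep[OF M True] False mat_finI[OF M T] by simp
    then show ?thesis using False True mrank_indep[OF M T] by (auto simp: mspan_def)
  next
    case D: False
    show ?thesis using False D mrank_dep[OF M T D] mrank_indep[OF M T] by (auto simp: mspan_def)
  qed
qed

lemma mspan_mono:
  assumes M: "matroid E I" and "I T" "I T'" "T \<subseteq> T'"
  shows "mspan E I T \<subseteq> mspan E I T'"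
proof
  fix e assume "e \<in> mspan E I T"
  then have "e \<in> E" "e \<in> T \<or> \<not> I (insert e T)" using mspan_char[OF M assms(2)] by auto
  moreover have "I (insert e T') \<Longrightarrow> I (insert e T)" using mat_down[OF M] assms(4) by blast
  ultimately show "e \<in> mspan E I T'" using mspan_char[OF M assms(3)] assms(4) by blast
qed

lemma mspan_sup: assumes M: "matroid E I" and "I T" shows "T \<subseteq> mspan E I T"
  using mspan_char[OF M assms(2)] mat_sub[OF M assms(2)] by auto

lemma mspan_card:
  assumes M: "matroid E I" and T: "I T" and O: "I OPT"
  shows "card (mspan E I T \<inter> OPT) \<le> card T"
proof (rule ccontr)
  let ?S = "mspan E I T \<inter> OPT"
  have S: "I ?S" using mat_down[OF M O] by auto
  assume "\<not> card ?S \<le> card T"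
  then obtain x where x: "x \<in> ?S - T" "I (insert x T)" using mat_exch[OF M T S] by auto
  then show False using mspan_char[OF M T, of x] by auto
qed

definition gstep :: "('a set \<Rightarrow> bool) \<Rightarrow> ('a set \<Rightarrow> bool) \<Rightarrow> 'a set \<Rightarrow> 'a \<Rightarrow> 'a set" where
  "gstep I1 I2 T e = (if I1 (insert e T) \<and> I2 (insert e T) then insert e T else T)"

lemma greedy_fold: "greedy I1 I2 xs = foldl (gstep I1 I2) {} xs"
proof -
  have "(\<lambda>T e. if I1 (insert e T) \<and> I2 (insert e T) then insert e T else T) = gstep I1 I2"
    by (intro ext) (simp add: gstep_def)
  then show ?thesis by (simp add: greedy_def)
qed

lemma fold_mono: "T \<subseteq> foldl (gstep I1 I2) T ys"
proof (induction ys arbitrary: T)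
  case (Cons y ys)
  have "T \<subseteq> gstep I1 I2 T y" by (auto simp: gstep_def)
  then show ?case using Cons[of "gstep I1 I2 T y"] by simp
qed simp

lemma fold_sub: "foldl (gstep I1 I2) T ys \<subseteq> T \<union> set ys"
proof (induction ys arbitrary: T)
  case (Cons y ys)
  then show ?case using Cons[of "gstep I1 I2 T y"] by (auto simp: gstep_def split: if_splits)
qed simp

lemma fold_indep: "I1 T \<Longrightarrow> I2 T \<Longrightarrow> I1 (foldl (gstep I1 I2) T ys) \<and> I2 (foldl (gstep I1 I2) T ys)"
  by (induction ys arbitrary: T) (auto simp: gstep_def)

lemma greedy_append: "greedy I1 I2 (xs @ ys) = foldl (gstep I1 I2) (greedy I1 I2 xs) ys"
  by (simp add: greedy_fold)

lemma greedy_sub: "greedy I1 I2 xs \<subseteq> set xs"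
  using fold_sub[of I1 I2 "{}" xs] by (simp add: greedy_fold)

lemma greedy_indep: "matroid E I1 \<Longrightarrow> matroid E I2 \<Longrightarrow> I1 (greedy I1 I2 xs) \<and> I2 (greedy I1 I2 xs)"
  unfolding greedy_fold by (rule fold_indep) (auto dest: mat_empty)

lemma greedy_take_mono: "i \<le> j \<Longrightarrow> greedy I1 I2 (take i xs) \<subseteq> greedy I1 I2 (take j xs)"
proof -
  assume "i \<le> j"
  then have "take j xs = take i xs @ drop i (take j xs)"
    by (metis append_take_drop_id min.absorb1 take_take)
  then show ?thesis using fold_mono by (metis greedy_append)
qed

lemma greedy_step_sub: "gstep I1 I2 (greedy I1 I2 xs) e \<subseteq> greedy I1 I2 (xs @ e # ys)"
  using fold_mono[of "gstep I1 I2 (greedy I1 I2 xs) e" I1 I2 ys] by (simp add: greedy_append)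

lemma greedy_elem:
  assumes M1: "matroid E I1" and M2: "matroid E I2"
  shows "e \<in> greedy I1 I2 (xs @ e # ys) \<or>
     \<not> (I1 (insert e (greedy I1 I2 (xs @ e # ys))) \<and> I2 (insert e (greedy I1 I2 (xs @ e # ys))))"
proof -
  let ?T = "greedy I1 I2 xs" and ?G = "greedy I1 I2 (xs @ e # ys)"
  have sub: "?T \<subseteq> ?G" using greedy_step_sub[of I1 I2 xs e ys] by (auto simp: gstep_def split: if_splits)
  show ?thesis
  proof (cases "I1 (insert e ?T) \<and> I2 (insert e ?T)")
    case True
    then show ?thesis using greedy_step_sub[of I1 I2 xs e ys] by (auto simp: gstep_def)
  next
    case False
    have "I1 (insert e ?G) \<Longrightarrow> I1 (insert e ?T)" using mat_down[OF M1] sub by blast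
    moreover have "I2 (insert e ?G) \<Longrightarrow> I2 (insert e ?T)" using mat_down[OF M2] sub by blast
    ultimately show ?thesis using False by blast
  qed
qed

definition ins :: "nat \<Rightarrow> 'a \<Rightarrow> 'a list \<Rightarrow> 'a list" where
  "ins j e r = take j r @ e # drop j r"

lemma split_unique: "xs @ e # ys = xs' @ e # ys' \<Longrightarrow> e \<notin> set xs \<Longrightarrow> e \<notin> set xs' \<Longrightarrow> xs = xs' \<and> ys = ys'"
proof (induction xs arbitrary: xs')
  case Nil then show ?case by (cases xs') auto
next
  case (Cons x xs) then show ?case by (cases xs') auto
qed

lemma ins_bij:
  assumes fin: "finite E" and e: "e \<in> E"
  shows "bij_betw (\<lambda>(r,j). ins j e r) (permutations_of_set (E - {e}) \<times> {..<card E}) (permutations_of_set E)"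
proof -
  have cE: "Suc (card (E - {e})) = card E" using card_Suc_Diff1[OF fin e] by simp
  show ?thesis
  proof (rule bij_betwI')
    fix x y assume x: "x \<in> permutations_of_set (E - {e}) \<times> {..<card E}"
      and y: "y \<in> permutations_of_set (E - {e}) \<times> {..<card E}"
    obtain r j where xr: "x = (r,j)" by (cases x)
    obtain r' j' where yr: "y = (r',j')" by (cases y)
    have x': "r \<in> permutations_of_set (E - {e})" "j < card E" using x xr by auto
    have r: "set r = E - {e}" "distinct r" "length r = card (E - {e})" "j \<le> length r"
      using permutations_of_setD[OF x'(1)] length_finite_permutations_of_set[OF x'(1)] x'(2) cE by auto
    have y': "r' \<in> permutations_of_set (E - {e})" "j' < card E" using y yr by auto
    have r': "set r' = E - {e}" "distinct r'" "length r' = card (E - {e})" "j' \<le> length r'"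
      using permutations_of_setD[OF y'(1)] length_finite_permutations_of_set[OF y'(1)] y'(2) cE by auto
    show "((\<lambda>(r,j). ins j e r) x = (\<lambda>(r,j). ins j e r) y) = (x = y)"
    proof
      assume "(\<lambda>(r,j). ins j e r) x = (\<lambda>(r,j). ins j e r) y"
      then have H: "take j r @ e # drop j r = take j' r' @ e # drop j' r'" by (simp add: xr yr ins_def)
      have H2: "e \<notin> set (take j r)" "e \<notin> set (take j' r')" 
      proof -
        have "e \<notin> set r" "e \<notin> set r'" using r(1) r'(1) by auto
        then show "e \<notin> set (take j r)" "e \<notin> set (take j' r')" by (meson in_set_takeD)+
      qed
      have eq: "take j r = take j' r'" "drop j r = drop j' r'" using split_unique[OF H H2] by simp_all
      have "length (take j r) = j" "length (take j' r') = j'" using r(4) r'(4) by simp_all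
      then have "j = j'" using eq(1) by metis
      moreover have "r = r'" using eq by (metis append_take_drop_id)
      ultimately show "x = y" by (simp add: xr yr)
    qed simp
  next
    fix x assume x: "x \<in> permutations_of_set (E - {e}) \<times> {..<card E}"
    obtain r j where xr: "x = (r,j)" by (cases x)
    have x': "r \<in> permutations_of_set (E - {e})" "j < card E" using x xr by auto
    have r: "set r = E - {e}" "distinct r" "length r = card (E - {e})" "j \<le> length r"
      using permutations_of_setD[OF x'(1)] length_finite_permutations_of_set[OF x'(1)] x'(2) cE by auto
    have tr: "take j r @ drop j r = r" by simp
    have "set (ins j e r) = insert e (set (take j r) \<union> set (drop j r))" by (auto simp: ins_def)
    moreover have "set (take j r) \<union> set (drop j r) = set r" by (metis append_take_drop_id set_append)
    ultimately have s1: "set (ins j e r) = E" using r(1) e by auto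
    have "distinct (take j r @ drop j r)" using r(2) tr by simp
    moreover have "e \<notin> set (take j r @ drop j r)" using r(1) tr by simp
    ultimately have "distinct (ins j e r)" unfolding ins_def by (auto simp del: append_take_drop_id)
    note s1 this
    then show "(\<lambda>(r,j). ins j e r) x \<in> permutations_of_set E" by (auto simp: xr)
  next
    fix p assume p: "p \<in> permutations_of_set E"
    then have "e \<in> set p" "distinct p" using e by (auto simp: permutations_of_set_def)
    then obtain xs ys where p2: "p = xs @ e # ys" "e \<notin> set xs" using split_list_first by metis
    have "xs @ ys \<in> permutations_of_set (E - {e})" using p p2
      by (auto simp: permutations_of_set_def)
    moreover have "length xs < card E"
    proof -
      have "length p = card E" by (rule length_finite_permutations_of_set[OF p])
      then show ?thesis using p2 by simp
    qed
    moreover have "ins (length xs) e (xs @ ys) = p" by (simp add: ins_def p2)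
    ultimately show "\<exists>x\<in>permutations_of_set (E - {e}) \<times> {..<card E}. p = (\<lambda>(r,j). ins j e r) x"
      by (intro bexI[of _ "(xs @ ys, length xs)"]) auto
  qed
qed

lemma sum_perm_split:
  assumes fin: "finite E" and e: "e \<in> E"
  shows "(\<Sum>p\<in>permutations_of_set E. g p) = (\<Sum>r\<in>permutations_of_set (E - {e}). \<Sum>j<card E. g (ins j e r))"
proof -
  have "(\<Sum>p\<in>permutations_of_set E. g p) = (\<Sum>x\<in>permutations_of_set (E - {e}) \<times> {..<card E}. g ((\<lambda>(r,j). ins j e r) x))"
    using sum.reindex_bij_betw[OF ins_bij[OF fin e], of g] by simp
  also have "\<dots> = (\<Sum>r\<in>permutations_of_set (E - {e}). \<Sum>j<card E. g (ins j e r))"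
    by (simp add: sum.cartesian_product split_def)
  finally show ?thesis .
qed

lemma take_ins_lt: "i < k \<Longrightarrow> i \<le> length r \<Longrightarrow>
   take k (ins i e r) = take i r @ e # take (k - Suc i) (drop i r)"
proof -
  assume a: "i < k" "i \<le> length r"
  have "k - i = Suc (k - Suc i)" using a by simp
  then show ?thesis using a by (simp add: ins_def take_append min_def)
qed

lemma take_ins_ge: "k \<le> j \<Longrightarrow> j \<le> length r \<Longrightarrow> take k (ins j e r) = take k r"
  by (simp add: ins_def take_append min_def)

lemma key:
  assumes M1: "matroid E I1" and M2: "matroid E I2" and eE: "e \<in> E"
    and jr: "j \<le> length r"
    and U: "e \<notin> mspan E I1 (greedy I1 I2 (take k (ins j e r)))"
           "e \<notin> mspan E I2 (greedy I1 I2 (take k (ins j e r)))"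
  shows "k \<le> j" and "\<And>i. i < k \<Longrightarrow> i \<le> length r \<Longrightarrow> e \<in> greedy I1 I2 (take k (ins i e r))"
proof -
  show kj: "k \<le> j"
  proof (rule ccontr)
    assume "\<not> k \<le> j"
    then have "j < k" by simp
    let ?G = "greedy I1 I2 (take k (ins j e r))"
    have tk: "take k (ins j e r) = take j r @ e # take (k - Suc j) (drop j r)"
      using take_ins_lt[OF \<open>j < k\<close> jr] .
    have ind: "I1 ?G" "I2 ?G" using greedy_indep[OF M1 M2] by auto
    have "e \<in> ?G \<or> \<not> (I1 (insert e ?G) \<and> I2 (insert e ?G))"
      unfolding tk by (rule greedy_elem[OF M1 M2])
    then show False using U mspan_char[OF M1 ind(1)] mspan_char[OF M2 ind(2)] eE by blast
  qed
  fix i assume ik: "i < k" and ir: "i \<le> length r"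
  let ?G = "greedy I1 I2 (take k r)"
  have tG: "take k (ins j e r) = take k r" using take_ins_ge[OF kj jr] .
  have ind: "I1 ?G" "I2 ?G" using greedy_indep[OF M1 M2] by auto
  have ins1: "I1 (insert e ?G)" "I2 (insert e ?G)"
    using U mspan_char[OF M1 ind(1)] mspan_char[OF M2 ind(2)] eE unfolding tG by blast+
  let ?H = "greedy I1 I2 (take i r)"
  have HG: "?H \<subseteq> ?G" using greedy_take_mono[of i k] ik by simp
  have sub: "insert e ?H \<subseteq> insert e ?G" using HG by blast
  have "I1 (insert e ?H)" "I2 (insert e ?H)"
    using mat_down[OF M1 ins1(1) sub] mat_down[OF M2 ins1(2) sub] by simp_all
  then have "e \<in> gstep I1 I2 ?H e" by (simp add: gstep_def)
  then show "e \<in> greedy I1 I2 (take k (ins i e r))"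
    unfolding take_ins_lt[OF ik ir] using greedy_step_sub[of I1 I2 "take i r" e "take (k - Suc i) (drop i r)"] by blast
qed

lemma count_one:
  assumes M1: "matroid E I1" and M2: "matroid E I2" and eE: "e \<in> E"
    and km: "k \<le> Suc (length r)"
  shows "k * card {j\<in>{..<Suc (length r)}. e \<notin> mspan E I1 (greedy I1 I2 (take k (ins j e r))) \<and>
                          e \<notin> mspan E I2 (greedy I1 I2 (take k (ins j e r)))}
       \<le> (Suc (length r) - k) * card {i\<in>{..<Suc (length r)}. e \<in> greedy I1 I2 (take k (ins i e r))}"
  (is "k * card ?A \<le> (?m - k) * card ?B")
proof (cases "?A = {}")
  case True show ?thesis unfolding True by simp
next
  case False
  then obtain j where j: "j \<in> ?A" by blast
  then have jr: "j \<le> length r" by auto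
  have A: "?A \<subseteq> {k..<?m}"
  proof
    fix x assume x: "x \<in> ?A"
    then have "x \<le> length r" "e \<notin> mspan E I1 (greedy I1 I2 (take k (ins x e r)))"
       "e \<notin> mspan E I2 (greedy I1 I2 (take k (ins x e r)))" by auto
    then have "k \<le> x" by (rule key(1)[OF M1 M2 eE])
    then show "x \<in> {k..<?m}" using x by auto
  qed
  have c1: "card ?A \<le> ?m - k" using card_mono[OF _ A] by simp
  have B: "{..<k} \<subseteq> ?B"
  proof
    fix i assume "i \<in> {..<k}"
    then have i: "i < k" by simp
    then have "i \<le> length r" using km by simp
    then show "i \<in> ?B" using key(2)[OF M1 M2 eE jr _ _ i] j i km by auto
  qed
  have c2: "k \<le> card ?B" using card_mono[OF _ B] by simp
  show ?thesis using mult_le_mono[OF c2 c1] by (simp add: mult.commute)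
qed

lemma card_filter_sum: "finite A \<Longrightarrow> card {x\<in>A. P x} = (\<Sum>x\<in>A. if P x then 1 else 0)"
  by (simp add: sum.If_cases Int_def)

lemma sum_card_split:
  assumes fin: "finite E" and sub: "OPT \<subseteq> E"
  shows "(\<Sum>p\<in>permutations_of_set E. card {e\<in>OPT. Q p e})
       = (\<Sum>e\<in>OPT. \<Sum>r\<in>permutations_of_set (E - {e}). card {j\<in>{..<card E}. Q (ins j e r) e})"
proof -
  have finO: "finite OPT" using fin sub finite_subset by blast
  have "(\<Sum>p\<in>permutations_of_set E. card {e\<in>OPT. Q p e})
      = (\<Sum>p\<in>permutations_of_set E. \<Sum>e\<in>OPT. (if Q p e then 1 else 0::nat))"
    using card_filter_sum[OF finO] by simp
  also have "\<dots> = (\<Sum>e\<in>OPT. \<Sum>p\<in>permutations_of_set E. (if Q p e then 1 else 0::nat))"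
    by (rule sum.swap)
  also have "\<dots> = (\<Sum>e\<in>OPT. \<Sum>r\<in>permutations_of_set (E - {e}). \<Sum>j<card E. (if Q (ins j e r) e then 1 else 0::nat))"
  proof (rule sum.cong[OF refl])
    fix e assume "e \<in> OPT"
    then have "e \<in> E" using sub by blast
    then show "(\<Sum>p\<in>permutations_of_set E. (if Q p e then 1 else 0::nat)) =
       (\<Sum>r\<in>permutations_of_set (E - {e}). \<Sum>j<card E. (if Q (ins j e r) e then 1 else 0::nat))"
      by (rule sum_perm_split[OF fin])
  qed
  also have "\<dots> = (\<Sum>e\<in>OPT. \<Sum>r\<in>permutations_of_set (E - {e}). card {j\<in>{..<card E}. Q (ins j e r) e})"
    using card_filter_sum[of "{..<card E}"] by simp
  finally show ?thesis .
qed

lemma charge: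
  assumes M1: "matroid E I1" and M2: "matroid E I2" and sub: "OPT \<subseteq> E" and km: "k \<le> card E"
  shows "k * (\<Sum>p\<in>permutations_of_set E. card {e\<in>OPT. e \<notin> mspan E I1 (greedy I1 I2 (take k p)) \<and>
                                                 e \<notin> mspan E I2 (greedy I1 I2 (take k p))})
       \<le> (card E - k) * (\<Sum>p\<in>permutations_of_set E. card {e\<in>OPT. e \<in> greedy I1 I2 (take k p)})"
proof -
  have fin: "finite E" using mat_fin[OF M1] .
  let ?a = "\<lambda>e r. card {j\<in>{..<card E}. e \<notin> mspan E I1 (greedy I1 I2 (take k (ins j e r))) \<and>
                                        e \<notin> mspan E I2 (greedy I1 I2 (take k (ins j e r)))}"
  let ?b = "\<lambda>e r. card {j\<in>{..<card E}. e \<in> greedy I1 I2 (take k (ins j e r))}"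
  have "k * (\<Sum>p\<in>permutations_of_set E. card {e\<in>OPT. e \<notin> mspan E I1 (greedy I1 I2 (take k p)) \<and>
                                                 e \<notin> mspan E I2 (greedy I1 I2 (take k p))})
        = (\<Sum>e\<in>OPT. \<Sum>r\<in>permutations_of_set (E - {e}). k * ?a e r)"
    by (simp add: sum_card_split[OF fin sub] sum_distrib_left)
  also have "\<dots> \<le> (\<Sum>e\<in>OPT. \<Sum>r\<in>permutations_of_set (E - {e}). (card E - k) * ?b e r)"
  proof (intro sum_mono)
    fix e r assume e: "e \<in> OPT" and r: "r \<in> permutations_of_set (E - {e})"
    have eE: "e \<in> E" using e sub by blast
    have "length r = card (E - {e})" using length_finite_permutations_of_set[OF r] .
    then have lr: "Suc (length r) = card E" using card_Suc_Diff1[OF fin eE] by simp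
    show "k * ?a e r \<le> (card E - k) * ?b e r"
      using count_one[OF M1 M2 eE, of k r] km unfolding lr by simp
  qed
  also have "\<dots> = (card E - k) * (\<Sum>p\<in>permutations_of_set E. card {e\<in>OPT. e \<in> greedy I1 I2 (take k p)})"
    by (simp add: sum_card_split[OF fin sub] sum_distrib_left)
  finally show ?thesis .
qed

lemma perm_facts:
  assumes M1: "matroid E I1" and M2: "matroid E I2" and O1: "I1 OPT" and O2: "I2 OPT"
    and p: "p \<in> permutations_of_set E" and km: "k \<le> card E"
  defines "T \<equiv> greedy I1 I2 (take k p)" and "G \<equiv> greedy I1 I2 p"
  defines "S1 \<equiv> mspan E I1 T \<inter> OPT" and "S2 \<equiv> mspan E I2 T \<inter> OPT"
  shows "card (S1 \<inter> S2) + card OPT \<le> 2 * card G"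
    and "card (S1 \<union> S2) + card {e\<in>OPT. e \<notin> mspan E I1 T \<and> e \<notin> mspan E I2 T} = card OPT"
    and "card {e\<in>OPT. e \<in> T} \<le> card (S1 \<inter> S2)"
    and "card (S1 \<union> S2) + card (S1 \<inter> S2) \<le> 2 * card T"
proof -
  have fin: "finite E" using mat_fin[OF M1] .
  have sub: "OPT \<subseteq> E" using mat_sub[OF M1 O1] .
  have finO: "finite OPT" using fin sub finite_subset by blast
  have lp: "length p = card E" using length_finite_permutations_of_set[OF p] .
  have sp: "set p = E" using permutations_of_setD(1)[OF p] .
  have iT: "I1 T" "I2 T" unfolding T_def using greedy_indep[OF M1 M2] by auto
  have iG: "I1 G" "I2 G" unfolding G_def using greedy_indep[OF M1 M2] by auto
  have TG: "T \<subseteq> G" unfolding T_def G_def using greedy_take_mono[of k "length p" I1 I2 p] km lp by simp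
  let ?A1 = "mspan E I1 G \<inter> OPT" and ?A2 = "mspan E I2 G \<inter> OPT"
  have cover: "?A1 \<union> ?A2 = OPT"
  proof
    show "OPT \<subseteq> ?A1 \<union> ?A2"
    proof
      fix e assume e: "e \<in> OPT"
      then have eE: "e \<in> E" using sub by blast
      then have "e \<in> set p" using sp by simp
      then obtain xs ys where p2: "p = xs @ e # ys" by (meson split_list)
      have "e \<in> G \<or> \<not> (I1 (insert e G) \<and> I2 (insert e G))"
        unfolding G_def p2 by (rule greedy_elem[OF M1 M2])
      then show "e \<in> ?A1 \<union> ?A2" using e eE mspan_char[OF M1 iG(1)] mspan_char[OF M2 iG(2)] by blast
    qed
  qed blast
  have c1: "card ?A1 \<le> card G" using mspan_card[OF M1 iG(1) O1] .
  have c2: "card ?A2 \<le> card G" using mspan_card[OF M2 iG(2) O2] .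
  have "card ?A1 + card ?A2 = card (?A1 \<union> ?A2) + card (?A1 \<inter> ?A2)"
    by (rule card_Un_Int) (use finO in auto)
  then have c3: "card (?A1 \<inter> ?A2) + card OPT \<le> 2 * card G" using c1 c2 cover by simp
  have "mspan E I1 T \<subseteq> mspan E I1 G" by (rule mspan_mono[OF M1 iT(1) iG(1) TG])
  moreover have "mspan E I2 T \<subseteq> mspan E I2 G" by (rule mspan_mono[OF M2 iT(2) iG(2) TG])
  ultimately have "S1 \<inter> S2 \<subseteq> ?A1 \<inter> ?A2" unfolding S1_def S2_def by blast
  then have "card (S1 \<inter> S2) \<le> card (?A1 \<inter> ?A2)" by (rule card_mono[rotated]) (use finO in auto)
  then show "card (S1 \<inter> S2) + card OPT \<le> 2 * card G" using c3 by simp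
  have "{e\<in>OPT. e \<notin> mspan E I1 T \<and> e \<notin> mspan E I2 T} = OPT - (S1 \<union> S2)"
    unfolding S1_def S2_def by blast
  moreover have ss: "S1 \<union> S2 \<subseteq> OPT" unfolding S1_def S2_def by blast
  moreover have "finite (S1 \<union> S2)" using ss finO finite_subset by blast
  moreover have "card (OPT - (S1 \<union> S2)) = card OPT - card (S1 \<union> S2)"
    using card_Diff_subset[OF \<open>finite (S1 \<union> S2)\<close> ss] .
  ultimately show "card (S1 \<union> S2) + card {e\<in>OPT. e \<notin> mspan E I1 T \<and> e \<notin> mspan E I2 T} = card OPT"
    using card_mono[OF finO ss] by simp
  have "T \<subseteq> mspan E I1 T" "T \<subseteq> mspan E I2 T" using mspan_sup[OF M1 iT(1)] mspan_sup[OF M2 iT(2)] .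
  then have "{e\<in>OPT. e \<in> T} \<subseteq> S1 \<inter> S2" unfolding S1_def S2_def by blast
  then show "card {e\<in>OPT. e \<in> T} \<le> card (S1 \<inter> S2)" by (rule card_mono[rotated]) (use finO in \<open>auto simp: S1_def\<close>)
  have "card S1 + card S2 = card (S1 \<union> S2) + card (S1 \<inter> S2)"
    by (rule card_Un_Int) (use finO in \<open>auto simp: S1_def S2_def\<close>)
  moreover have "card S1 \<le> card T" unfolding S1_def using mspan_card[OF M1 iT(1) O1] .
  moreover have "card S2 \<le> card T" unfolding S2_def using mspan_card[OF M2 iT(2) O2] .
  ultimately show "card (S1 \<union> S2) + card (S1 \<inter> S2) \<le> 2 * card T" by simp
qed

theorem lemma5:
  fixes E :: "'a set" and I1 I2 :: "'a set \<Rightarrow> bool" and OPT :: "'a set"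
    and f \<epsilon> :: real
  assumes "matroid E I1" and "matroid E I2"
    and "I1 OPT" and "I2 OPT"
    and "\<forall>S. I1 S \<and> I2 S \<longrightarrow> card S \<le> card OPT"
    and "0 < f" and "f \<le> 1/2" and "0 < \<epsilon>" and "\<epsilon> \<le> 1/2"
    and "exp_order E (\<lambda>\<pi>. real (card (greedy_at I1 I2 1 \<pi>)))
           \<le> (1/2 + \<epsilon>) * real (card OPT)"
  shows "exp_order E (\<lambda>\<pi>. real (card
            ((mspan E I1 (greedy_at I1 I2 f \<pi>) \<inter> OPT) \<inter>
             (mspan E I2 (greedy_at I1 I2 f \<pi>) \<inter> OPT))))
           \<le> 2 * \<epsilon> * real (card OPT)
    \<and> exp_order E (\<lambda>\<pi>. real (card
            ((mspan E I1 (greedy_at I1 I2 f \<pi>) \<inter> OPT) \<union>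
             (mspan E I2 (greedy_at I1 I2 f \<pi>) \<inter> OPT))))
           \<ge> (1 - 2 * \<epsilon> / f + 2 * \<epsilon>) * real (card OPT)
    \<and> exp_order E (\<lambda>\<pi>. real (card (greedy_at I1 I2 f \<pi>)))
           \<ge> (1/2 - (1/f - 2) * \<epsilon>) * real (card OPT)"
proof -
  note M1 = assms(1) and M2 = assms(2) and O1 = assms(3) and O2 = assms(4)
  have fin: "finite E" using mat_fin[OF M1] .
  have sub: "OPT \<subseteq> E" using mat_sub[OF M1 O1] .
  have finO: "finite OPT" using fin sub finite_subset by blast
  define m where "m = card E"
  define P where "P = permutations_of_set E"
  define k where "k = nat \<lceil>f * real m\<rceil>"
  have fk: "f * real m \<le> real k" unfolding k_def by (rule real_nat_ceiling_ge)
  have "f * real m \<le> real m" using assms(6,7) mult_right_mono[of f 1 "real m"] by simp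
  then have ce: "\<lceil>f * real m\<rceil> \<le> int m" by (simp add: ceiling_le_iff)
  have km: "k \<le> m" unfolding k_def using ce nat_le_iff by blast
  have NP: "card P > 0" unfolding P_def using fin by simp
  have lenP: "\<And>p. p \<in> P \<Longrightarrow> length p = m"
    unfolding P_def m_def by (rule length_finite_permutations_of_set)
  have gaf: "\<And>p. p \<in> P \<Longrightarrow> greedy_at I1 I2 f p = greedy I1 I2 (take k p)"
    unfolding greedy_at_def k_def using lenP by simp
  have ga1: "\<And>p. p \<in> P \<Longrightarrow> greedy_at I1 I2 1 p = greedy I1 I2 p"
    unfolding greedy_at_def by simp
  define T where "T p = greedy I1 I2 (take k p)" for p
  define S1 where "S1 p = mspan E I1 (T p) \<inter> OPT" for p
  define S2 where "S2 p = mspan E I2 (T p) \<inter> OPT" for p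
  define U where "U p = {e\<in>OPT. e \<notin> mspan E I1 (T p) \<and> e \<notin> mspan E I2 (T p)}" for p
  define V where "V p = {e\<in>OPT. e \<in> T p}" for p
  define SX where "SX = (\<Sum>p\<in>P. card (S1 p \<inter> S2 p))"
  define SY where "SY = (\<Sum>p\<in>P. card (S1 p \<union> S2 p))"
  define SZ where "SZ = (\<Sum>p\<in>P. card (T p))"
  define SW where "SW = (\<Sum>p\<in>P. card (greedy I1 I2 p))"
  define SU where "SU = (\<Sum>p\<in>P. card (U p))"
  define SV where "SV = (\<Sum>p\<in>P. card (V p))"
  define c0 where "c0 = card OPT"
  have pf: "\<And>p. p \<in> P \<Longrightarrow> card (S1 p \<inter> S2 p) + c0 \<le> 2 * card (greedy I1 I2 p)
         \<and> card (S1 p \<union> S2 p) + card (U p) = c0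
         \<and> card (V p) \<le> card (S1 p \<inter> S2 p)
         \<and> card (S1 p \<union> S2 p) + card (S1 p \<inter> S2 p) \<le> 2 * card (T p)"
  proof -
    fix p assume p: "p \<in> P"
    have p': "p \<in> permutations_of_set E" using p P_def by simp
    have km': "k \<le> card E" using km m_def by simp
    show "?thesis p" unfolding S1_def S2_def U_def V_def T_def c0_def
      using perm_facts[OF M1 M2 O1 O2 p' km'] by simp
  qed
  have h1: "SX + card P * c0 \<le> 2 * SW"
  proof -
    have "SX + card P * c0 = (\<Sum>p\<in>P. card (S1 p \<inter> S2 p) + c0)" by (simp add: SX_def sum.distrib)
    also have "\<dots> \<le> (\<Sum>p\<in>P. 2 * card (greedy I1 I2 p))" by (rule sum_mono) (use pf in blast)
    also have "\<dots> = 2 * SW" by (simp add: SW_def sum_distrib_left)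
    finally show ?thesis .
  qed
  have h2: "SY + SU = card P * c0"
  proof -
    have "SY + SU = (\<Sum>p\<in>P. card (S1 p \<union> S2 p) + card (U p))" by (simp add: SY_def SU_def sum.distrib)
    also have "\<dots> = (\<Sum>p\<in>P. c0)" by (rule sum.cong) (use pf in auto)
    finally show ?thesis by simp
  qed
  have h3: "SV \<le> SX" unfolding SV_def SX_def by (rule sum_mono) (use pf in blast)
  have h4: "SY + SX \<le> 2 * SZ"
  proof -
    have "SY + SX = (\<Sum>p\<in>P. card (S1 p \<union> S2 p) + card (S1 p \<inter> S2 p))" by (simp add: SY_def SX_def sum.distrib)
    also have "\<dots> \<le> (\<Sum>p\<in>P. 2 * card (T p))" by (rule sum_mono) (use pf in blast)
    also have "\<dots> = 2 * SZ" by (simp add: SZ_def sum_distrib_left)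
    finally show ?thesis .
  qed
  have h5: "k * SU \<le> (m - k) * SV"
    using charge[OF M1 M2 sub, of k] km unfolding SU_def SV_def U_def V_def T_def P_def m_def by simp
  define N where "N = real (card P)"
  have Npos: "N > 0" using NP N_def by simp
  have e1: "exp_order E (\<lambda>\<pi>. real (card (greedy_at I1 I2 1 \<pi>))) = real SW / N"
    unfolding exp_order_def N_def SW_def P_def[symmetric] of_nat_sum
    by (rule arg_cong[where f="\<lambda>x. x / _"], rule sum.cong) (simp_all add: ga1)
  have e2: "exp_order E (\<lambda>\<pi>. real (card
            ((mspan E I1 (greedy_at I1 I2 f \<pi>) \<inter> OPT) \<inter>
             (mspan E I2 (greedy_at I1 I2 f \<pi>) \<inter> OPT)))) = real SX / N"
    unfolding exp_order_def N_def SX_def P_def[symmetric] of_nat_sum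
    by (rule arg_cong[where f="\<lambda>x. x / _"], rule sum.cong) (simp_all add: gaf S1_def S2_def T_def)
  have e3: "exp_order E (\<lambda>\<pi>. real (card
            ((mspan E I1 (greedy_at I1 I2 f \<pi>) \<inter> OPT) \<union>
             (mspan E I2 (greedy_at I1 I2 f \<pi>) \<inter> OPT)))) = real SY / N"
    unfolding exp_order_def N_def SY_def P_def[symmetric] of_nat_sum
    by (rule arg_cong[where f="\<lambda>x. x / _"], rule sum.cong) (simp_all add: gaf S1_def S2_def T_def)
  have e4: "exp_order E (\<lambda>\<pi>. real (card (greedy_at I1 I2 f \<pi>))) = real SZ / N"
    unfolding exp_order_def N_def SZ_def P_def[symmetric] of_nat_sum
    by (rule arg_cong[where f="\<lambda>x. x / _"], rule sum.cong) (simp_all add: gaf T_def)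
  have hyp: "real SW \<le> (1/2 + \<epsilon>) * real c0 * N"
    using assms(10) Npos unfolding e1 c0_def by (simp add: divide_le_eq)
  have r1: "real SX + N * real c0 \<le> 2 * real SW" using h1 unfolding N_def
    by (metis of_nat_add of_nat_le_iff of_nat_mult of_nat_numeral)
  have r2: "real SY + real SU = N * real c0" using h2 unfolding N_def
    by (metis of_nat_add of_nat_mult)
  have r3: "real SV \<le> real SX" using h3 by simp
  have r4: "real SY + real SX \<le> 2 * real SZ" using h4
    by (metis of_nat_add of_nat_le_iff of_nat_mult of_nat_numeral)
  have SXnn: "0 \<le> real SX" by simp
  have SUnn: "0 \<le> real SU" by simp
  have R: "f * real SU \<le> (1 - f) * real SX"
  proof (cases "k = 0")
    case True
    then have "real m = 0" using fk assms(6) by (simp add: mult_le_0_iff)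
    then have "card E = 0" unfolding m_def by simp
    then have "c0 = 0" unfolding c0_def using card_mono[OF fin sub] by simp
    then have "real SU = 0" using r2 SUnn by simp
    then show ?thesis using SXnn assms(7) by simp
  next
    case False
    then have kpos: "real k > 0" by simp
    have "real k * real SU \<le> real (m - k) * real SV" using h5
      by (metis of_nat_le_iff of_nat_mult)
    also have "\<dots> \<le> real (m - k) * real SX" using r3 by (simp add: mult_left_mono)
    finally have a: "real k * real SU \<le> (real m - real k) * real SX" using km by (simp add: of_nat_diff)
    have "real k * (f * real SU) = f * (real k * real SU)" by simp
    also have "\<dots> \<le> f * ((real m - real k) * real SX)" using a assms(6) by (simp add: mult_left_mono)
    also have "\<dots> = (f * real m - f * real k) * real SX" by (simp add: algebra_simps)
    also have "\<dots> \<le> (real k - f * real k) * real SX" using fk SXnn by (simp add: mult_right_mono)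
    also have "\<dots> = real k * ((1 - f) * real SX)" by (simp add: algebra_simps)
    finally show ?thesis using kpos by simp
  qed
  have r2f: "f * real SU + f * real SY = f * N * real c0"
    using arg_cong[OF r2, of "\<lambda>x. f * x"] by (simp add: algebra_simps)
  have r4f: "f * real SY + f * real SX \<le> 2 * f * real SZ"
    using mult_left_mono[OF r4, of f] assms(6) by (simp add: algebra_simps)
  define X where "X = real SX"
  define eo where "eo = \<epsilon> * real c0 * N"
  have eonn: "0 \<le> eo" unfolding eo_def using assms(8) Npos by simp
  have hyp': "real SW \<le> real c0 * N / 2 + eo" using hyp unfolding eo_def by (simp add: algebra_simps)
  have G1: "X \<le> 2 * eo" using r1 hyp' unfolding X_def by (simp add: algebra_simps)
  have "real SX / N \<le> 2 * \<epsilon> * real c0"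
    using G1 Npos unfolding X_def eo_def by (simp add: divide_le_eq algebra_simps)
  moreover have "(1 - 2 * \<epsilon> / f + 2 * \<epsilon>) * real c0 \<le> real SY / N"
  proof -
    have "(1 - f) * X \<le> (1 - f) * (2 * eo)" using G1 assms(7) by (intro mult_left_mono) auto
    then have "f * real SU \<le> (1 - f) * (2 * eo)" using R unfolding X_def by linarith
    then have "f * (N * real c0 - real SY) \<le> (1 - f) * (2 * eo)" using r2f by (simp add: algebra_simps)
    then have num: "f * N * real c0 - (1 - f) * (2 * eo) \<le> f * real SY" by (simp add: algebra_simps)
    have eq: "(1 - 2 * \<epsilon> / f + 2 * \<epsilon>) * real c0 * N = (f * N * real c0 - (1 - f) * (2 * eo)) / f"
      using assms(6) unfolding eo_def by (simp add: field_simps)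
    have "(1 - 2 * \<epsilon> / f + 2 * \<epsilon>) * real c0 * N \<le> real SY"
      unfolding eq using num assms(6) by (simp add: pos_divide_le_eq mult.commute)
    then show ?thesis using Npos by (simp add: le_divide_eq)
  qed
  moreover have "(1/2 - (1/f - 2) * \<epsilon>) * real c0 \<le> real SZ / N"
  proof -
    have "f * (real SU - real SX) \<le> (1 - 2 * f) * real SX" using R by (simp add: algebra_simps)
    also have "\<dots> \<le> (1 - 2 * f) * (2 * eo)" using G1 assms(7) unfolding X_def by (simp add: mult_left_mono)
    finally have a: "f * (real SU - real SX) \<le> (1 - 2 * f) * (2 * eo)" .
    have "2 * f * real SZ \<ge> f * (N * real c0 - real SU + real SX)"
      using r4f r2f by (simp add: algebra_simps)
    then have "2 * f * real SZ \<ge> f * N * real c0 - (1 - 2 * f) * (2 * eo)" using a by (simp add: algebra_simps)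
    then have num: "f * N * real c0 - (1 - 2 * f) * (2 * eo) \<le> 2 * f * real SZ" by simp
    have eq: "(1/2 - (1/f - 2) * \<epsilon>) * real c0 * N = (f * N * real c0 - (1 - 2 * f) * (2 * eo)) / (2 * f)"
      using assms(6) unfolding eo_def by (simp add: field_simps)
    have "(1/2 - (1/f - 2) * \<epsilon>) * real c0 * N \<le> real SZ"
      unfolding eq using num assms(6) by (simp add: pos_divide_le_eq mult.commute mult.left_commute)
    then show ?thesis using Npos by (simp add: le_divide_eq)
  qed
  ultimately show ?thesis unfolding e2 e3 e4 c0_def by simp
qed

end
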